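(* Let $\alpha=(\sqrt5-1)/2$. Define $\varepsilon_1(n)=1$ if $n=F_{2k}-1$ for some $k\ge1$ and $\varepsilon_1(n)=0$ otherwise; define $\varepsilon_2(n)=1$ if $n=F_{2k+1}-1$ for some $k\ge1$ and $\varepsilon_2(n)=0$ otherwise. Then for all $n\ge0$, $$a(n)=\lfloor (n+1)\alpha\rfloor+\varepsilon_1(n),\qquad b(n)=\lfloor (n+1)\alpha\rfloor-\varepsilon_2(n).$$
   Context: $\mathbb{N}=\{0,1,2,\dots\}$. Fibonacci numbers: $F_0=0$, $F_1=1$, $F_k=F_{k-1}+F_{k-2}$. Hofstadter's "married" sequences $a,b:\mathbb{N}\to\mathbb{N}$ are defined by $a(0)=1$, $b(0)=0$ and, for $n\ge1$, $b(n)=n-a(b(n-1))$ and $a(n)=n-b(a(n-1))$ (computing $b(n)$ before $a(n)$ at each step). First values: $a=1,1,2,2,3,3,4,5,5,6,6,\dots$, $b=0,0,1,2,2,3,4,4,5,6,6,\dots$. *)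

theory Defs
  imports Complex_Main "HOL-Number_Theory.Fib"
begin

text \<open>Hofstadter's married sequences. hof_tables n = (list of a(0..n), list of b(0..n)).
  At step n, b(n) = n - a(b(n-1)) is computed first, then a(n) = n - b(a(n-1)),
  where the latter may use the freshly computed b(n).\<close>

fun hof_tables :: "nat \<Rightarrow> nat list \<times> nat list" where
  "hof_tables 0 = ([1], [0])"
| "hof_tables (Suc m) =
     (let (A, B) = hof_tables m;
          n = Suc m;
          bn = n - A ! (B ! m);
          B' = B @ [bn];
          an = n - B' ! (A ! m)
      in (A @ [an], B'))"

definition hof_a :: "nat \<Rightarrow> nat" where
  "hof_a n = fst (hof_tables n) ! n"

definition hof_b :: "nat \<Rightarrow> nat" where
  "hof_b n = snd (hof_tables n) ! n"

definition eps1 :: "nat \<Rightarrow> int" where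
  "eps1 n = (if \<exists>k\<ge>1. n = fib (2*k) - 1 then 1 else 0)"

definition eps2 :: "nat \<Rightarrow> int" where
  "eps2 n = (if \<exists>k\<ge>1. n = fib (2*k+1) - 1 then 1 else 0)"

lemma "map hof_a [0..<11] = [1,1,2,2,3,3,4,5,5,6,6]"
  by (simp add: hof_a_def numeral_eq_Suc)
lemma "map hof_b [0..<11] = [0,0,1,2,2,3,4,4,5,6,6]"
  by (simp add: hof_b_def numeral_eq_Suc)

end

theory Submission
  imports Defs
begin


definition al :: real where "al = (sqrt 5 - 1)/2"
definition Gi :: "nat \<Rightarrow> int" where "Gi n = \<lfloor>real (n+1) * al\<rfloor>"

lemma al_sq: "al^2 = 1 - al"
  unfolding al_def by (simp add: power2_eq_square algebra_simps add_divide_distrib diff_divide_distrib)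

lemma sqrt5_bounds: "2.2 < sqrt 5" "sqrt 5 < 2.25"
proof -
  show "2.2 < sqrt 5" by (rule real_less_rsqrt) (simp add: power2_eq_square)
  have "sqrt 5 < sqrt (2.25^2)" by (subst real_sqrt_less_iff) (simp add: power2_eq_square)
  then show "sqrt 5 < 2.25" by simp
qed

lemma al_bounds: "0.6 < al" "al < 0.625"
  using sqrt5_bounds unfolding al_def by auto

lemma dvd5: assumes "5 dvd (m::nat)^2" shows "5 dvd m"
proof -
  have e: "m^2 mod 5 = (m mod 5)^2 mod 5" by (simp add: power_mod)
  have "m mod 5 = 0 \<or> m mod 5 = 1 \<or> m mod 5 = 2 \<or> m mod 5 = 3 \<or> m mod 5 = 4" by presburger
  then show ?thesis using e assms by (auto simp: power2_eq_square dvd_eq_mod_eq_0)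
qed

lemma no_sq5: "m^2 = 5 * n^2 \<Longrightarrow> (n::nat) = 0"
proof (induction n arbitrary: m rule: less_induct)
  case (less n)
  show ?case
  proof (rule ccontr)
    assume n0: "n \<noteq> 0"
    have "5 dvd m^2" using less.prems by simp
    then have "5 dvd m" by (rule dvd5)
    then obtain a where a: "m = 5*a" by blast
    have "n^2 = 5*a^2" using less.prems a by (simp add: power2_eq_square)
    then have "5 dvd n^2" by simp
    then have "5 dvd n" by (rule dvd5)
    then obtain b where b: "n = 5*b" by blast
    have "a^2 = 5*b^2" using \<open>n^2 = 5*a^2\<close> b by (simp add: power2_eq_square)
    have "b < n" using b n0 by simp
    from less.IH[OF this \<open>a^2 = 5*b^2\<close>] have "b = 0" .
    with b n0 show False by simp
  qed
qed

lemma al_irr: assumes "n > 0" shows "real n * al \<noteq> of_int k"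
proof
  assume h: "real n * al = of_int k"
  have "real n * sqrt 5 = 2 * of_int k + real n" using h unfolding al_def by (simp add: algebra_simps)
  then have "(real n * sqrt 5)^2 = (2 * of_int k + real n)^2" by simp
  then have e: "5 * (real n)^2 = (2 * of_int k + real n)^2" by (simp add: power_mult_distrib)
  have "2 * of_int k + real n \<ge> 0"
    using \<open>real n * sqrt 5 = _\<close>[symmetric] by simp
  then have nn: "2*k + int n \<ge> 0" by linarith
  define m where "m = nat (2*k + int n)"
  have "real m = 2 * of_int k + real n" using nn unfolding m_def by simp
  with e have "real (m^2) = real (5 * n^2)" by simp
  then have "m^2 = 5*n^2" using of_nat_eq_iff by blast
  from no_sq5[OF this] assms show False by simp
qed

lemma al_pos: "0 < al" "al < 1" using al_bounds by auto

lemma fib_al: "real (fib (Suc i)) * al = real (fib i) - (-al)^(Suc i)"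
proof (induction i rule: fib.induct)
  case 1
  then show ?case by simp
next
  case 2
  then show ?case using al_sq by (simp add: power2_eq_square)
next
  case (3 n)
  have e: "(-al)^(Suc (Suc (Suc n))) = (-al)^(Suc n) * al^2" by (simp add: power2_eq_square)
  have e2: "(-al)^(Suc (Suc n)) = - ((-al)^(Suc n) * al)" by simp
  show ?case using 3 e e2 al_sq by (simp add: algebra_simps)
qed

lemma Gi_ge0: "Gi n \<ge> 0" unfolding Gi_def using al_pos by simp

lemma Gi_le: "Gi n \<le> int n"
proof -
  have "real (n+1) * al < real (n+1)" using al_pos by simp
  then show ?thesis unfolding Gi_def by linarith
qed

lemma Gi_mono: "m \<le> n \<Longrightarrow> Gi m \<le> Gi n"
  unfolding Gi_def using al_pos by (intro floor_mono mult_right_mono) auto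

lemma Gi_eqI: "of_int z \<le> real (x+1) * al \<Longrightarrow> real (x+1) * al < of_int z + 1 \<Longrightarrow> Gi x = z"
  unfolding Gi_def by (simp add: floor_eq_iff)

lemma Gi_rec: "Gi (Suc m) + Gi (nat (Gi m)) = int (Suc m)"
proof -
  define x where "x = real (m+1) * al"
  define k where "k = Gi m"
  define f where "f = x - of_int k"
  have k0: "k \<ge> 0" unfolding k_def by (rule Gi_ge0)
  have kx: "k = \<lfloor>x\<rfloor>" unfolding k_def x_def Gi_def by simp
  have f01: "0 \<le> f" "f < 1" unfolding f_def kx by linarith+
  have fne: "f \<noteq> 0" using al_irr[of "m+1" k] unfolding f_def x_def by auto
  have fne2: "f \<noteq> 1 - al"
  proof
    assume "f = 1 - al"
    then have "real (m+2) * al = of_int (k+1)" unfolding f_def x_def by (simp add: algebra_simps)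
    with al_irr[of "m+2" "k+1"] show False by simp
  qed
  have A: "real (Suc m + 1) * al = x + al" unfolding x_def by (simp add: algebra_simps)
  have "x * al = real (m+1) * al^2" unfolding x_def by (simp add: power2_eq_square)
  then have xal: "x * al = real (m+1) - x" unfolding x_def using al_sq by (simp add: algebra_simps)
  have B: "real (nat k + 1) * al = real (m+1) - of_int k - f + (1-f)*al"
  proof -
    have "real (nat k + 1) * al = (x - f + 1) * al" using k0 unfolding f_def by simp
    also have "\<dots> = x*al + (1-f)*al" by (simp add: algebra_simps)
    finally show ?thesis using xal unfolding f_def by simp
  qed
  have kk: "real (nat k) = of_int k" using k0 by simp
  have afp: "0 \<le> al * f" using al_pos f01 by simp
  have afl: "al * f \<le> al" using al_pos f01 by (simp add: mult_left_le)
  have key: "(1-al)*(1+al) = al" using al_sq by (simp add: power2_eq_square algebra_simps)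
  show ?thesis
  proof (cases "f + al < 1")
    case True
    have g1: "Gi (Suc m) = k" using A True f01 al_pos unfolding f_def by (intro Gi_eqI) auto
    have "f*(1+al) < (1-al)*(1+al)" using True al_pos by (intro mult_strict_right_mono) auto
    then have "f*(1+al) < al" using key by simp
    then have g2: "Gi (nat k) = int (m+1) - k" using B f01 al_pos kk afp afl
      by (intro Gi_eqI; simp add: algebra_simps; linarith)
    show ?thesis using g1 g2 k_def by simp
  next
    case False
    then have ff: "f > 1 - al" using fne2 by auto
    have g1: "Gi (Suc m) = k + 1" using A False f01 al_pos unfolding f_def by (intro Gi_eqI) auto
    have "f*(1+al) > (1-al)*(1+al)" using ff al_pos by (intro mult_strict_right_mono) auto
    then have "f*(1+al) > al" using key by simp
    then have g2: "Gi (nat k) = int (m+1) - k - 1" using B f01 al_pos kk afp afl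
      by (intro Gi_eqI; simp add: algebra_simps; linarith)
    show ?thesis using g1 g2 k_def by simp
  qed
qed



lemma fib_odd: "real (fib (2*t+1)) * al = real (fib (2*t)) + al^(2*t+1)"
  using fib_al[of "2*t"] by simp

lemma fib_even: "real (fib (2*t+2)) * al = real (fib (2*t+1)) - al^(2*t+2)"
proof -
  have h: "real (fib (Suc (2*t+1))) * al = real (fib (2*t+1)) - (-al)^(Suc (2*t+1))" by (rule fib_al)
  have e: "(-al)^(2*(t+1)) = al^(2*(t+1))" by (simp only: power_mult) simp
  have s: "Suc (2*t+1) = 2*t+2" "2*(t+1) = 2*t+2" by simp_all
  show ?thesis using h e unfolding s by simp
qed

lemma Gi_val: "real (x+1) * al = of_int z + d \<Longrightarrow> 0 \<le> d \<Longrightarrow> d < 1 \<Longrightarrow> Gi x = z"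
  unfolding Gi_def by (simp add: floor_eq_iff)

lemma Gi_lt: "real (x+1) * al = of_int z + d \<Longrightarrow> d < 0 \<Longrightarrow> Gi x < z"
  unfolding Gi_def by (simp add: floor_less_iff)

lemma alpow_pos: "0 < al^n" using al_pos by simp
lemma alpow_le: "m \<le> n \<Longrightarrow> al^n \<le> al^m"
  using al_pos by (intro power_decreasing) auto
lemma alpow_lt: "m < n \<Longrightarrow> al^n < al^m"
  using al_pos by (intro power_strict_decreasing) auto
lemma al3: "al^3 = 2*al - 1"
proof -
  have a: "al*al = 1 - al" using al_sq by (simp add: power2_eq_square)
  have "al^3 = al * (al*al)" by (simp add: power3_eq_cube)
  also have "\<dots> = al * (1 - al)" using a by simp
  also have "\<dots> = al - al*al" by (simp add: algebra_simps)
  finally show ?thesis using a by simp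
qed
lemma al5: "al^5 < 2*al - 1"
proof -
  have "al^5 < 0.625^5" using al_bounds al_pos by (intro power_strict_mono) auto
  moreover have "(0.625::real)^5 < 0.2" by (simp add: power_numeral_reduce)
  ultimately show ?thesis using al_bounds by simp
qed
lemma al4: "al^4 + al < 1"
proof -
  have "al^4 < al^2" by (rule alpow_lt) simp
  then show ?thesis using al_sq by simp
qed
lemma al3b: "al^3 + al < 1" using al3 al_bounds by simp

lemma rx: "x + c = fib n \<Longrightarrow> real (x+1) * al = real (fib n) * al - (real c - 1) * al"
proof -
  assume "x + c = fib n"
  then have "real x + real c = real (fib n)" by (metis of_nat_add)
  then have "real (x+1) = real (fib n) - real c + 1" by simp
  then show ?thesis by (simp only:) (simp add: algebra_simps)
qed

lemma GA1: assumes "x + 2 = fib (2*t+1)" "t \<ge> 1" shows "Gi x = int (fib (2*t)) - 1"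
proof -
  have v: "real (x+1) * al = of_int (int (fib (2*t)) - 1) + (1 + al^(2*t+1) - al)"
    using rx[OF assms(1)] fib_odd[of t] by (simp add: algebra_simps)
  have "al^(2*t+1) < al" using assms(2) alpow_lt[of 1 "2*t+1"] by simp
  then show ?thesis using al_pos alpow_pos[of "2*t+1"] by (intro Gi_val[OF v]; linarith)
qed

lemma GA2: assumes "x + 1 = fib (2*t+1)" shows "Gi x = int (fib (2*t))"
proof -
  have v: "real (x+1) * al = of_int (int (fib (2*t))) + al^(2*t+1)"
    using rx[OF assms(1)] fib_odd[of t] by (simp add: algebra_simps)
  have "al^(2*t+1) \<le> al" using alpow_le[of 1 "2*t+1"] by simp
  then show ?thesis using al_pos alpow_pos[of "2*t+1"] by (intro Gi_val[OF v]; linarith)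
qed

lemma GA3: assumes "x + 3 = fib (2*t+1)" shows "Gi x < int (fib (2*t)) - 1"
proof -
  have t2: "t \<ge> 2"
  proof (rule ccontr)
    assume "\<not> t \<ge> 2"
    then have "t = 0 \<or> t = 1" by auto
    then show False using assms by (auto simp: numeral_eq_Suc)
  qed
  have v: "real (x+1) * al = of_int (int (fib (2*t)) - 1) + (1 + al^(2*t+1) - 2*al)"
    using rx[OF assms(1)] fib_odd[of t] by (simp add: algebra_simps)
  have "al^(2*t+1) \<le> al^5" using t2 by (intro alpow_le) simp
  then show ?thesis using al5 by (intro Gi_lt[OF v]; linarith)
qed

lemma GB1: assumes "x + 2 = fib (2*t+2)" "t \<ge> 1" shows "Gi x = int (fib (2*t+1)) - 1"
proof -
  have v: "real (x+1) * al = of_int (int (fib (2*t+1)) - 1) + (1 - al^(2*t+2) - al)"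
    using rx[OF assms(1)] fib_even[of t] by (simp add: algebra_simps)
  have "al^(2*t+2) \<le> al^4" using assms(2) by (intro alpow_le) simp
  then show ?thesis using al_pos al4 alpow_pos[of "2*t+2"] by (intro Gi_val[OF v]; linarith)
qed

lemma GB2: assumes "x + 1 = fib (2*t+2)" shows "Gi x = int (fib (2*t+1)) - 1"
proof -
  have v: "real (x+1) * al = of_int (int (fib (2*t+1)) - 1) + (1 - al^(2*t+2))"
    using rx[OF assms(1)] fib_even[of t] by (simp add: algebra_simps)
  have "al^(2*t+2) \<le> al" using alpow_le[of 1 "2*t+2"] by simp
  then show ?thesis using al_pos alpow_pos[of "2*t+2"] by (intro Gi_val[OF v]; linarith)
qed

lemma GC2: assumes "x = fib (2*t+2)" shows "Gi x = int (fib (2*t+1))"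
proof -
  have v: "real (x+1) * al = of_int (int (fib (2*t+1))) + (al - al^(2*t+2))"
    using rx[of x 0 "2*t+2"] assms fib_even[of t] by (simp add: algebra_simps)
  have "al^(2*t+2) \<le> al" using alpow_le[of 1 "2*t+2"] by simp
  then show ?thesis using al_pos alpow_pos[of "2*t+2"] by (intro Gi_val[OF v]; linarith)
qed

lemma GB4: assumes "x + 3 = fib (2*t+2)" shows "Gi x < int (fib (2*t+1)) - 1"
proof -
  have v: "real (x+1) * al = of_int (int (fib (2*t+1)) - 1) + (1 - al^(2*t+2) - 2*al)"
    using rx[OF assms(1)] fib_even[of t] by (simp add: algebra_simps)
  show ?thesis using al_bounds alpow_pos[of "2*t+2"] by (intro Gi_lt[OF v]; linarith)
qed

lemma GD2: assumes "x = fib (2*t+1)" shows "Gi x = int (fib (2*t)) + (if t = 0 then 1 else 0)"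
proof (cases "t = 0")
  case True
  have v: "real (x+1) * al = of_int 1 + (2*al - 1)" using assms True by simp
  show ?thesis using True al_bounds by (simp add: Gi_val[OF v])
next
  case False
  have v: "real (x+1) * al = of_int (int (fib (2*t))) + (al^(2*t+1) + al)"
    using rx[of x 0 "2*t+1"] assms fib_odd[of t] by (simp add: algebra_simps)
  have "al^(2*t+1) \<le> al^3" using False by (intro alpow_le) simp
  then have "Gi x = int (fib (2*t))" using al3b al_pos alpow_pos[of "2*t+1"] by (intro Gi_val[OF v]; linarith)
  then show ?thesis using False by simp
qed



lemma fib_between:
  assumes "0 < p" "fib p < y" "y \<le> fib (Suc p)" "fib q = y" shows "q = Suc p"
proof (rule ccontr)
  assume ne: "q \<noteq> Suc p"
  show False
  proof (cases "q \<le> p")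
    case True
    then show False using fib_mono[OF True] assms by simp
  next
    case False
    with ne have "Suc (Suc p) \<le> q" by simp
    from fib_mono[OF this] have "fib (Suc (Suc p)) \<le> fib q" .
    moreover have "fib (Suc (Suc p)) = fib (Suc p) + fib p" by simp
    moreover have "fib p > 0" using assms(1) by (rule fib_neq_0_nat)
    ultimately show False using assms by simp
  qed
qed

lemma eps_range: "0 \<le> eps1 n" "eps1 n \<le> 1" "0 \<le> eps2 n" "eps2 n \<le> 1"
  unfolding eps1_def eps2_def by auto

lemma E3: assumes "k \<ge> 1" shows "eps2 (fib (2*k+1)) = 0"
proof -
  have "\<not> (\<exists>j\<ge>1. fib (2*k+1) = fib (2*j+1) - 1)"
  proof
    assume "\<exists>j\<ge>1. fib (2*k+1) = fib (2*j+1) - 1"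
    then obtain j where j: "fib (2*k+1) = fib (2*j+1) - 1" by blast
    have p1: "fib (2*k+1) > 0" "fib (2*j+1) > 0" by (simp_all add: fib_neq_0_nat)
    have y: "fib (2*j+1) = fib (2*k+1) + 1" using j p1 by simp
    have f2: "fib (2*k) > 0" using assms by (simp add: fib_neq_0_nat)
    have "fib (Suc (2*k+1)) = fib (2*k+1) + fib (2*k)" using fib_plus_2[of "2*k"] by simp
    then have "2*j+1 = Suc (2*k+1)" using f2 y by (intro fib_between[of _ "fib (2*j+1)"]) auto
    then show False by presburger
  qed
  then show ?thesis unfolding eps2_def by simp
qed

lemma E4: "eps1 (fib (2*t+2)) = 0"
proof -
  have "\<not> (\<exists>k\<ge>1. fib (2*t+2) = fib (2*k) - 1)"
  proof
    assume "\<exists>k\<ge>1. fib (2*t+2) = fib (2*k) - 1"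
    then obtain k where k: "k \<ge> 1" "fib (2*t+2) = fib (2*k) - 1" by blast
    have p1: "fib (2*t+2) > 0" "fib (2*k) > 0" using k(1) by (simp_all add: fib_neq_0_nat)
    have y: "fib (2*k) = fib (2*t+2) + 1" using k p1 by simp
    have f2: "fib (2*t+1) > 0" by (simp add: fib_neq_0_nat)
    have "fib (Suc (2*t+2)) = fib (2*t+2) + fib (2*t+1)" using fib_plus_2[of "2*t+1"] by simp
    then have "2*k = Suc (2*t+2)" using f2 y by (intro fib_between[of _ "fib (2*k)"]) auto
    then show False by presburger
  qed
  then show ?thesis unfolding eps1_def by simp
qed

lemma FactA: assumes "t \<ge> 1" shows "Gi m = int (fib (2*t)) - 1 \<longleftrightarrow> m + 2 = fib (2*t+1)"
proof
  assume "m + 2 = fib (2*t+1)" then show "Gi m = int (fib (2*t)) - 1" using GA1 assms by blast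
next
  assume h: "Gi m = int (fib (2*t)) - 1"
  show "m + 2 = fib (2*t+1)"
  proof (rule ccontr)
    assume ne: "m + 2 \<noteq> fib (2*t+1)"
    show False
    proof (cases "m + 2 < fib (2*t+1)")
      case True
      define x where "x = fib (2*t+1) - 3"
      have x: "x + 3 = fib (2*t+1)" "m \<le> x" using True ne unfolding x_def by auto
      have "Gi m \<le> Gi x" using Gi_mono x(2) .
      with GA3[OF x(1)] h show False by simp
    next
      case False
      define x where "x = fib (2*t+1) - 1"
      have "fib (2*t+1) > 0" by (simp add: fib_neq_0_nat)
      then have x: "x + 1 = fib (2*t+1)" "x \<le> m" using False ne unfolding x_def by auto
      have "Gi x \<le> Gi m" using Gi_mono x(2) .
      with GA2[OF x(1)] h show False by simp
    qed
  qed
qed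

lemma FactB: assumes "t \<ge> 1"
  shows "Gi m = int (fib (2*t+1)) - 1 \<longleftrightarrow> (m + 2 = fib (2*t+2) \<or> m + 1 = fib (2*t+2))"
proof
  assume "m + 2 = fib (2*t+2) \<or> m + 1 = fib (2*t+2)"
  then show "Gi m = int (fib (2*t+1)) - 1" using GB1 GB2 assms by blast
next
  assume h: "Gi m = int (fib (2*t+1)) - 1"
  show "m + 2 = fib (2*t+2) \<or> m + 1 = fib (2*t+2)"
  proof (rule ccontr)
    assume ne: "\<not> (m + 2 = fib (2*t+2) \<or> m + 1 = fib (2*t+2))"
    show False
    proof (cases "m + 2 < fib (2*t+2)")
      case True
      define x where "x = fib (2*t+2) - 3"
      have x: "x + 3 = fib (2*t+2)" "m \<le> x" using True ne unfolding x_def by auto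
      have "Gi m \<le> Gi x" using Gi_mono x(2) .
      with GB4[OF x(1)] h show False by simp
    next
      case False
      define x where "x = fib (2*t+2)"
      have x: "x \<le> m" using False ne unfolding x_def by auto
      have "Gi x \<le> Gi m" using Gi_mono x .
      with GC2[OF x_def] h show False by simp
    qed
  qed
qed



lemma KB: "Gi (nat (Gi m - eps2 m)) + eps1 (nat (Gi m - eps2 m)) = Gi (nat (Gi m)) + eps2 (Suc m)"
proof (cases "\<exists>k\<ge>1. m = fib (2*k+1) - 1")
  case True
  then obtain k where k: "k \<ge> 1" "m = fib (2*k+1) - 1" by blast
  then obtain t where kt: "k = t + 1" by (metis add.commute le_Suc_ex)
  have s1: "2*k+1 = 2*(t+1)+1" "2*k = 2*t+2" using kt by simp_all
  have e2: "eps2 m = 1" unfolding eps2_def using True by simp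
  have pf: "fib (2*k+1) > 0" by (simp add: fib_neq_0_nat)
  have m1: "m + 1 = fib (2*k+1)" using k pf by simp
  have gm: "Gi m = int (fib (2*t+2))" using GA2[OF m1] s1 by simp
  define q where "q = fib (2*t+2) - 1"
  have pf2: "fib (2*t+2) > 0" by (simp add: fib_neq_0_nat)
  have q1: "q + 1 = fib (2*t+2)" unfolding q_def using pf2 by simp
  have nq: "nat (Gi m - eps2 m) = q" using gm e2 q1 by simp
  have gq: "Gi q = int (fib (2*t+1)) - 1" by (rule GB2[OF q1])
  have eq: "eps1 q = 1" unfolding eps1_def
  proof -
    have "q = fib (2*(t+1)) - 1" unfolding q_def by simp
    then show "(if \<exists>k\<ge>1. q = fib (2 * k) - 1 then 1 else 0) = (1::int)" by auto
  qed
  have ngm: "nat (Gi m) = fib (2*t+2)" using gm by (simp only: nat_int)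
  have gg: "Gi (nat (Gi m)) = int (fib (2*t+1))" by (rule GC2[OF ngm])
  have es: "eps2 (Suc m) = 0" using E3[OF k(1)] m1 by simp
  show ?thesis using nq gq eq gg es by simp
next
  case False
  have e2: "eps2 m = 0" unfolding eps2_def using False by simp
  have iff: "(nat (Gi m) = fib (2*k) - 1) = (Suc m = fib (2*k+1) - 1)" if "k \<ge> 1" for k
  proof -
    have p: "fib (2*k) > 0" "fib (2*k+1) > 0" using that by (simp_all add: fib_neq_0_nat)
    have "(nat (Gi m) = fib (2*k) - 1) = (Gi m = int (fib (2*k)) - 1)" using p Gi_ge0[of m] by auto
    also have "\<dots> = (m + 2 = fib (2*k+1))" by (rule FactA[OF that])
    also have "\<dots> = (Suc m = fib (2*k+1) - 1)" using p by auto
    finally show ?thesis .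
  qed
  have "(\<exists>k\<ge>1. nat (Gi m) = fib (2*k) - 1) = (\<exists>k\<ge>1. Suc m = fib (2*k+1) - 1)"
    using iff by blast
  then have "eps1 (nat (Gi m)) = eps2 (Suc m)" unfolding eps1_def eps2_def by simp
  then show ?thesis using e2 by simp
qed



lemma KA: "Gi (nat (Gi m + eps1 m)) - eps2 (nat (Gi m + eps1 m)) = Gi (nat (Gi m)) - eps1 (Suc m)"
proof (cases "\<exists>k\<ge>1. m = fib (2*k) - 1")
  case True
  then obtain k where k: "k \<ge> 1" "m = fib (2*k) - 1" by blast
  then obtain t where kt: "k = t + 1" by (metis add.commute le_Suc_ex)
  have s1: "2*k = 2*t+2" using kt by simp_all
  have e1: "eps1 m = 1" unfolding eps1_def using True by simp
  have pf: "fib (2*t+2) > 0" by (simp add: fib_neq_0_nat)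
  have m1: "m + 1 = fib (2*t+2)" using k pf s1 by simp
  have gm: "Gi m = int (fib (2*t+1)) - 1" by (rule GB2[OF m1])
  have np: "nat (Gi m + eps1 m) = fib (2*t+1)" using gm e1 by simp
  have gp: "Gi (fib (2*t+1)) = int (fib (2*t)) + (if t = 0 then 1 else 0)" by (rule GD2) simp
  have ep: "eps2 (fib (2*t+1)) = (if t = 0 then 1 else 0)"
  proof (cases "t = 0")
    case True
    have "fib (2*t+1) = fib (2*1+1) - 1" using True by (simp add: numeral_eq_Suc)
    then show ?thesis using True unfolding eps2_def by auto
  next
    case False
    then show ?thesis using E3[of t] by simp
  qed
  have pf1: "fib (2*t+1) > 0" by (simp add: fib_neq_0_nat)
  have x1: "nat (Gi m) + 1 = fib (2*t+1)" using gm pf1 by simp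
  have gg: "Gi (nat (Gi m)) = int (fib (2*t))" by (rule GA2[OF x1])
  have es: "eps1 (Suc m) = 0" using E4[of t] m1 by simp
  show ?thesis using np gp ep gg es by simp
next
  case False
  have e1: "eps1 m = 0" unfolding eps1_def using False by simp
  have "(\<exists>j\<ge>1. nat (Gi m) = fib (2*j+1) - 1) = (\<exists>k\<ge>1. Suc m = fib (2*k) - 1)"
  proof
    assume "\<exists>j\<ge>1. nat (Gi m) = fib (2*j+1) - 1"
    then obtain j where j: "j \<ge> 1" "nat (Gi m) = fib (2*j+1) - 1" by blast
    have p: "fib (2*j+1) > 0" "fib (2*j+2) > 0" by (simp_all add: fib_neq_0_nat)
    have "Gi m = int (fib (2*j+1)) - 1" using j p Gi_ge0[of m] by auto
    then have "m + 2 = fib (2*j+2) \<or> m + 1 = fib (2*j+2)" using FactB[OF j(1)] by simp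
    moreover have "m + 1 \<noteq> fib (2*j+2)"
    proof
      assume "m + 1 = fib (2*j+2)"
      then have mm: "m = fib (2*(j+1)) - 1" by simp
      have "j + 1 \<ge> 1" by simp
      with False mm show False by blast
    qed
    ultimately have "Suc m = fib (2*(j+1)) - 1" by simp
    then show "\<exists>k\<ge>1. Suc m = fib (2*k) - 1" by (intro exI[of _ "j+1"]) simp
  next
    assume "\<exists>k\<ge>1. Suc m = fib (2*k) - 1"
    then obtain k where k: "k \<ge> 1" "Suc m = fib (2*k) - 1" by blast
    have k2: "k \<ge> 2"
    proof (rule ccontr)
      assume "\<not> k \<ge> 2" then have "k = 1" using k by simp
      with k show False by (simp add: numeral_eq_Suc)
    qed
    define j where "j = k - 1"
    have kj: "k = j + 1" "j \<ge> 1" using k2 unfolding j_def by simp_all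
    have pf: "fib (2*j+2) > 0" "fib (2*j+1) > 0" by (simp_all add: fib_neq_0_nat)
    have "m + 2 = fib (2*j+2)" using k kj pf by simp
    then have "Gi m = int (fib (2*j+1)) - 1" using FactB[OF kj(2)] by simp
    then have "nat (Gi m) = fib (2*j+1) - 1" using pf by simp
    then show "\<exists>j\<ge>1. nat (Gi m) = fib (2*j+1) - 1" using kj by blast
  qed
  then have "eps2 (nat (Gi m)) = eps1 (Suc m)" unfolding eps1_def eps2_def by simp
  then show ?thesis using e1 by simp
qed



lemma tables: "hof_tables n = (map hof_a [0..<Suc n], map hof_b [0..<Suc n])"
proof (induction n)
  case 0
  show ?case by (simp add: hof_a_def hof_b_def)
next
  case (Suc m)
  have "\<exists>X Y. hof_tables (Suc m) = (map hof_a [0..<Suc m] @ [X], map hof_b [0..<Suc m] @ [Y])"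
    by (simp add: Suc.IH Let_def)
  then obtain X Y where h: "hof_tables (Suc m) = (map hof_a [0..<Suc m] @ [X], map hof_b [0..<Suc m] @ [Y])"
    by blast
  have "hof_a (Suc m) = X" unfolding hof_a_def h by (simp add: nth_append)
  moreover have "hof_b (Suc m) = Y" unfolding hof_b_def h by (simp add: nth_append)
  ultimately show ?case using h by simp
qed

lemma rec_b: assumes "hof_b m \<le> m" shows "hof_b (Suc m) = Suc m - hof_a (hof_b m)"
proof -
  have "hof_b (Suc m) = snd (hof_tables (Suc m)) ! Suc m" by (simp only: hof_b_def)
  also have "\<dots> = Suc m - hof_a (hof_b m)"
    using assms by (simp add: tables[of m] Let_def nth_append del: upt_Suc)
  finally show ?thesis .
qed

lemma rec_a: assumes "hof_a m \<le> Suc m" "hof_b m \<le> m" shows "hof_a (Suc m) = Suc m - hof_b (hof_a m)"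
proof -
  have "hof_a (Suc m) = fst (hof_tables (Suc m)) ! Suc m" by (simp only: hof_a_def)
  also have "\<dots> = Suc m - hof_b (hof_a m)"
  proof -
    have B: "(map hof_b [0..<Suc m] @ [Suc m - hof_a (hof_b m)]) ! hof_a m = hof_b (hof_a m)"
    proof (cases "hof_a m < Suc m")
      case True
      then show ?thesis by (simp add: nth_append del: upt_Suc)
    next
      case False
      then have "hof_a m = Suc m" using assms by simp
      then show ?thesis using rec_b[OF assms(2)] by (simp add: nth_append del: upt_Suc)
    qed
    have L: "\<And>v. (map hof_a [0..<Suc m] @ [v]) ! Suc m = v" by (simp add: nth_append del: upt_Suc)
    show ?thesis using assms by (simp add: B L tables[of m] Let_def del: upt_Suc)
  qed
  finally show ?thesis .
qed



lemma main: "int (hof_a n) = Gi n + eps1 n \<and> int (hof_b n) = Gi n - eps2 n"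
proof (induction n rule: less_induct)
  case (less n)
  show ?case
  proof (cases n)
    case 0
    have a0: "hof_a 0 = 1" "hof_b 0 = 0" by (simp_all add: hof_a_def hof_b_def)
    have g0: "Gi 0 = 0" using al_bounds by (intro Gi_val[where d = al]) auto
    have e1: "eps1 0 = 1"
    proof -
      have "(0::nat) = fib (2*1) - 1" by (simp add: numeral_eq_Suc)
      then have "\<exists>k\<ge>1. (0::nat) = fib (2*k) - 1" by (intro exI[of _ 1]) simp
      then show ?thesis unfolding eps1_def by (simp only: if_True)
    qed
    have e2: "eps2 0 = 0"
    proof -
      have "fib (2*k+1) \<ge> 2" if "k \<ge> 1" for k
      proof -
        have "fib (2*1+1) \<le> fib (2*k+1)" using that by (intro fib_mono) simp
        moreover have "fib (2*1+1) = 2" by (simp add: numeral_eq_Suc)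
        ultimately show ?thesis by simp
      qed
      then have "\<not> (\<exists>k\<ge>1. (0::nat) = fib (2*k+1) - 1)"
      proof -
        assume H: "\<And>k. k \<ge> 1 \<Longrightarrow> fib (2*k+1) \<ge> 2"
        show ?thesis
        proof
          assume "\<exists>k\<ge>1. (0::nat) = fib (2*k+1) - 1"
          then obtain k where "k \<ge> 1" "(0::nat) = fib (2*k+1) - 1" by blast
          with H[of k] show False by linarith
        qed
      qed
      then show ?thesis unfolding eps2_def by simp
    qed
    show ?thesis using 0 a0 g0 e1 e2 by simp
  next
    case (Suc m)
    have IHm: "int (hof_a m) = Gi m + eps1 m" "int (hof_b m) = Gi m - eps2 m" using less.IH[of m] Suc by auto
    have r1: "0 \<le> eps1 k" "eps1 k \<le> 1" "0 \<le> eps2 k" "eps2 k \<le> 1" for k using eps_range by auto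
    have gl: "Gi k \<le> int k" "0 \<le> Gi k" for k using Gi_le Gi_ge0 by auto
    define q where "q = hof_b m"
    have qle: "q \<le> m" using IHm(2) gl[of m] r1[of m] unfolding q_def by linarith
    have nq: "q = nat (Gi m - eps2 m)" using IHm(2) unfolding q_def by simp
    have IHq: "int (hof_a q) = Gi q + eps1 q" using less.IH[of q] qle Suc by auto
    have aqle: "hof_a q \<le> Suc m" using IHq gl[of q] r1[of q] qle by linarith
    have bS: "hof_b (Suc m) = Suc m - hof_a q" using rec_b qle unfolding q_def by blast
    have B: "int (hof_b (Suc m)) = Gi (Suc m) - eps2 (Suc m)"
    proof -
      have "int (hof_b (Suc m)) = int (Suc m) - (Gi q + eps1 q)" using bS aqle IHq by simp
      also have "\<dots> = int (Suc m) - (Gi (nat (Gi m)) + eps2 (Suc m))" using KB[of m] nq by simp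
      also have "\<dots> = Gi (Suc m) - eps2 (Suc m)" using Gi_rec[of m] by simp
      finally show ?thesis .
    qed
    define p where "p = hof_a m"
    have ple: "p \<le> Suc m" using IHm(1) gl[of m] r1[of m] unfolding p_def by linarith
    have np: "p = nat (Gi m + eps1 m)" using IHm(1) unfolding p_def by simp
    have IHp: "int (hof_b p) = Gi p - eps2 p"
    proof (cases "p < Suc m")
      case True then show ?thesis using less.IH[of p] Suc by auto
    next
      case False then have "p = Suc m" using ple by simp
      then show ?thesis using B by simp
    qed
    have bple: "hof_b p \<le> Suc m" using IHp gl[of p] r1[of p] ple by linarith
    have aS: "hof_a (Suc m) = Suc m - hof_b p" using rec_a ple qle unfolding p_def q_def by blast
    have A: "int (hof_a (Suc m)) = Gi (Suc m) + eps1 (Suc m)"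
    proof -
      have "int (hof_a (Suc m)) = int (Suc m) - (Gi p - eps2 p)" using aS bple IHp by simp
      also have "\<dots> = int (Suc m) - (Gi (nat (Gi m)) - eps1 (Suc m))" using KA[of m] np by simp
      also have "\<dots> = Gi (Suc m) + eps1 (Suc m)" using Gi_rec[of m] by simp
      finally show ?thesis .
    qed
    show ?thesis using A B Suc by simp
  qed
qed

theorem theorem8:
  fixes n :: nat
  defines "\<alpha> \<equiv> (sqrt 5 - 1) / 2"
  shows "int (hof_a n) = \<lfloor>real (n + 1) * \<alpha>\<rfloor> + eps1 n
       \<and> int (hof_b n) = \<lfloor>real (n + 1) * \<alpha>\<rfloor> - eps2 n"
  using main[of n] unfolding Gi_def al_def \<alpha>_def .

end
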